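(* Let $T$ be a tiling class (with finite local complexity) and $\mathcal N$ an approximating sub-almost-groupoid of $\mathcal M_{II}$. Then the topology of $\Omega_{\mathcal N}$ is generated by the sets $U_u$ with $u$ a unit of $\mathcal N$.
   Context: A $d$-dimensional tiling is a countable family of bounded closed subsets of $\mathbb R^d$ (tiles, closures of interiors, finitely many decorations) covering $\mathbb R^d$ and overlapping only at boundaries, up to translation; finite local complexity: finitely many classes of pairs of touching tiles. $\mathcal M_{II}$: doubly pointed pattern classes $M_{xy}$; $M_{x_1x_2}\preceq N_{y_1y_2}$ if $N$ contains a translate of $M$ with $x_i$ on $y_i$; $c\vdash c'$ if some $L_{z_1z_2}$ and tile $z$ of $L$ satisfy $c\preceq L_{z_1z}$, $c'\preceq L_{zz_2}$, $cc'$ being the minimal such; $(M_{xy})^{-1}=M_{yx}$; units $M_{xx}$; $L(c)=cc^{-1}$, $R(c)=c^{-1}c$; $\mathrm{rad}(u)$ the largest $r$ such that $u$ covers all $r$-balls centred in its pointed tile. A sub-almost-groupoid is a subset closed under inverses and products of composable elements. Hull $\Omega$: completion of the pointed tilings $T_x$ under $d(\omega,\omega')=e^{-\sup\{r:M_r(\omega)=M_r(\omega')\}}$; $u\preceq\omega$ if $u$ occurs at $\omega$'s pointed tile; $U_u=\{\omega:u\preceq\omega\}$. An approximating sequence is a sequence of units $u_\nu$ with $u_1\cdots u_k\vdash u_{k+1}$ for all $k$ and $\mathrm{rad}(u_\nu)\to\infty$; its limit is the pointed tiling containing all $u_\nu$ at its pointed tile. $\Omega_{\mathcal N}=\bigcup_{c\in\mathcal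 N}U_{R(c)}$ with relative topology; $\mathcal N$ is approximating if every $\omega\in\Omega_{\mathcal N}$ is the limit of an approximating sequence with elements in $\mathcal N$. *)

theory Defs
  imports "HOL-Analysis.Analysis"
begin

text \<open>The ambient space R^d is an arbitrary Euclidean space 'a (d = DIM('a)).
  A tile is a subset of 'a together with a decoration (label) of type 'l.\<close>

type_synonym ('a,'l) tile = "'a set \<times> 'l"

definition tile_tr :: "'a::euclidean_space \<Rightarrow> ('a,'l) tile \<Rightarrow> ('a,'l) tile" where
  "tile_tr v t = ((\<lambda>p. v + p) ` fst t, snd t)"

definition is_tiling :: "('a::euclidean_space,'l) tile set \<Rightarrow> bool" where
  "is_tiling W \<longleftrightarrow>
     countable W \<and>
     (\<forall>t\<in>W. fst t \<noteq> {} \<and> bounded (fst t) \<and> closed (fst t) \<and> closure (interior (fst t)) = fst t) \<and>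
     finite (snd ` W) \<and>
     \<Union>(fst ` W) = UNIV \<and>
     (\<forall>t\<in>W. \<forall>t'\<in>W. t \<noteq> t' \<longrightarrow> interior (fst t) \<inter> interior (fst t') = {})"

text \<open>Finite local complexity: finitely many translation classes of pairs of touching tiles.\<close>
definition flc :: "('a::euclidean_space,'l) tile set \<Rightarrow> bool" where
  "flc W \<longleftrightarrow> (\<exists>F. finite F \<and>
     (\<forall>t\<in>W. \<forall>t'\<in>W. fst t \<inter> fst t' \<noteq> {} \<longrightarrow>
        (\<exists>(a,b)\<in>F. \<exists>v. t = tile_tr v a \<and> t' = tile_tr v b)))"

type_synonym ('a,'l) dpp = "('a,'l) tile set \<times> ('a,'l) tile \<times> ('a,'l) tile"
type_synonym ('a,'l) dpclass = "('a,'l) dpp set"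

definition dpp_tr :: "'a::euclidean_space \<Rightarrow> ('a,'l) dpp \<Rightarrow> ('a,'l) dpp" where
  "dpp_tr v p = (case p of (M,x,y) \<Rightarrow> (tile_tr v ` M, tile_tr v x, tile_tr v y))"

definition dpcls :: "('a::euclidean_space,'l) dpp \<Rightarrow> ('a,'l) dpclass" where
  "dpcls p = range (\<lambda>v. dpp_tr v p)"

definition MII :: "('a::euclidean_space,'l) tile set \<Rightarrow> ('a,'l) dpclass set" where
  "MII T = {dpcls (M,x,y) | M x y. finite M \<and> M \<subseteq> T \<and> x \<in> M \<and> y \<in> M}"

definition dp_le :: "('a::euclidean_space,'l) dpclass \<Rightarrow> ('a,'l) dpclass \<Rightarrow> bool" where
  "dp_le c c' \<longleftrightarrow> (\<exists>(M,x1,x2)\<in>c. \<exists>(N,y1,y2)\<in>c'. M \<subseteq> N \<and> x1 = y1 \<and> x2 = y2)"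

definition prod_cands :: "('a::euclidean_space,'l) tile set \<Rightarrow> ('a,'l) dpclass \<Rightarrow> ('a,'l) dpclass \<Rightarrow> ('a,'l) dpclass set" where
  "prod_cands T c c' = {e \<in> MII T. \<exists>(L,z1,z2)\<in>e. \<exists>z\<in>L.
        dp_le c (dpcls (L,z1,z)) \<and> dp_le c' (dpcls (L,z,z2))}"

definition is_prod :: "('a::euclidean_space,'l) tile set \<Rightarrow> ('a,'l) dpclass \<Rightarrow> ('a,'l) dpclass \<Rightarrow> ('a,'l) dpclass \<Rightarrow> bool" where
  "is_prod T c c' e \<longleftrightarrow> e \<in> prod_cands T c c' \<and> (\<forall>e'\<in>prod_cands T c c'. dp_le e e')"

definition composable :: "('a::euclidean_space,'l) tile set \<Rightarrow> ('a,'l) dpclass \<Rightarrow> ('a,'l) dpclass \<Rightarrow> bool" where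
  "composable T c c' \<longleftrightarrow> (\<exists>e. is_prod T c c' e)"

definition dprod :: "('a::euclidean_space,'l) tile set \<Rightarrow> ('a,'l) dpclass \<Rightarrow> ('a,'l) dpclass \<Rightarrow> ('a,'l) dpclass" where
  "dprod T c c' = (THE e. is_prod T c c' e)"

definition dpinv :: "('a::euclidean_space,'l) dpclass \<Rightarrow> ('a,'l) dpclass" where
  "dpinv c = (\<lambda>(M,x,y). (M,y,x)) ` c"

definition dp_unit :: "('a::euclidean_space,'l) tile set \<Rightarrow> ('a,'l) dpclass \<Rightarrow> bool" where
  "dp_unit T u \<longleftrightarrow> u \<in> MII T \<and> (\<exists>(M,x,y)\<in>u. x = y)"

definition Rc :: "('a::euclidean_space,'l) tile set \<Rightarrow> ('a,'l) dpclass \<Rightarrow> ('a,'l) dpclass" where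
  "Rc T c = dprod T (dpinv c) c"

definition rad :: "('a::euclidean_space,'l) dpclass \<Rightarrow> real" where
  "rad u = Sup {r. \<exists>(M,x,y)\<in>u. \<forall>p\<in>fst x. cball p r \<subseteq> \<Union>(fst ` M)}"

definition sub_almost_groupoid :: "('a::euclidean_space,'l) tile set \<Rightarrow> ('a,'l) dpclass set \<Rightarrow> bool" where
  "sub_almost_groupoid T N \<longleftrightarrow> N \<subseteq> MII T \<and> (\<forall>c\<in>N. dpinv c \<in> N) \<and>
     (\<forall>c\<in>N. \<forall>c'\<in>N. composable T c c' \<longrightarrow> dprod T c c' \<in> N)"

type_synonym ('a,'l) ptiling = "('a,'l) tile set \<times> ('a,'l) tile"

definition is_ptiling :: "('a::euclidean_space,'l) ptiling \<Rightarrow> bool" where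
  "is_ptiling \<omega> \<longleftrightarrow> is_tiling (fst \<omega>) \<and> snd \<omega> \<in> fst \<omega>"

definition patch :: "('a::euclidean_space,'l) ptiling \<Rightarrow> real \<Rightarrow> ('a,'l) tile set" where
  "patch \<omega> r = {s \<in> fst \<omega>. \<exists>p\<in>fst (snd \<omega>). \<exists>q\<in>fst s. dist p q \<le> r}"

definition agree :: "('a::euclidean_space,'l) ptiling \<Rightarrow> ('a,'l) ptiling \<Rightarrow> real \<Rightarrow> bool" where
  "agree \<omega> \<omega>' r \<longleftrightarrow> (\<exists>v. tile_tr v ` patch \<omega> r = patch \<omega>' r \<and> tile_tr v (snd \<omega>) = snd \<omega>')"

text \<open>d(\<omega>,\<omega>') = exp(-sup{r : M_r(\<omega>) = M_r(\<omega>')}), with exp(-\<infinity>) = 0 and sup over r \<ge> 0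
  (sup of the empty set read as 0).\<close>
definition hdist :: "('a::euclidean_space,'l) ptiling \<Rightarrow> ('a,'l) ptiling \<Rightarrow> real" where
  "hdist \<omega> \<omega>' = (if \<forall>r\<ge>0. agree \<omega> \<omega>' r then 0
      else exp (- Sup (insert 0 {r. r \<ge> 0 \<and> agree \<omega> \<omega>' r})))"

text \<open>The hull: the completion of {T_x}, realised (as in the paper) by pointed tilings, namely
  the closure of {T_x | x \<in> T} in the space of pointed tilings w.r.t. d.\<close>
definition Hull :: "('a::euclidean_space,'l) tile set \<Rightarrow> ('a,'l) ptiling set" where
  "Hull T = {\<omega>. is_ptiling \<omega> \<and> (\<forall>e>0. \<exists>x\<in>T. hdist \<omega> (T,x) < e)}"

definition hull_top :: "('a::euclidean_space,'l) tile set \<Rightarrow> ('a,'l) ptiling topology" where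
  "hull_top T = topology (\<lambda>S. S \<subseteq> Hull T \<and>
      (\<forall>\<omega>\<in>S. \<exists>e>0. \<forall>\<omega>'\<in>Hull T. hdist \<omega> \<omega>' < e \<longrightarrow> \<omega>' \<in> S))"

definition occurs_at :: "('a::euclidean_space,'l) dpclass \<Rightarrow> ('a,'l) ptiling \<Rightarrow> bool" where
  "occurs_at u \<omega> \<longleftrightarrow> (\<exists>(M,x,y)\<in>u. M \<subseteq> fst \<omega> \<and> x = snd \<omega> \<and> y = snd \<omega>)"

definition Uset :: "('a::euclidean_space,'l) tile set \<Rightarrow> ('a,'l) dpclass \<Rightarrow> ('a,'l) ptiling set" where
  "Uset T u = {\<omega> \<in> Hull T. occurs_at u \<omega>}"

definition OmegaN :: "('a::euclidean_space,'l) tile set \<Rightarrow> ('a,'l) dpclass set \<Rightarrow> ('a,'l) ptiling set" where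
  "OmegaN T N = (\<Union>c\<in>N. Uset T (Rc T c))"

text \<open>u_1 \<cdots> u_k, left-associated (indices shifted to start at 0).\<close>
fun iprod :: "('a::euclidean_space,'l) tile set \<Rightarrow> (nat \<Rightarrow> ('a,'l) dpclass) \<Rightarrow> nat \<Rightarrow> ('a,'l) dpclass" where
  "iprod T u 0 = u 0"
| "iprod T u (Suc k) = dprod T (iprod T u k) (u (Suc k))"

definition approx_seq :: "('a::euclidean_space,'l) tile set \<Rightarrow> (nat \<Rightarrow> ('a,'l) dpclass) \<Rightarrow> bool" where
  "approx_seq T u \<longleftrightarrow> (\<forall>n. dp_unit T (u n)) \<and>
     (\<forall>k. composable T (iprod T u k) (u (Suc k))) \<and>
     filterlim (\<lambda>n. rad (u n)) at_top sequentially"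

definition is_limit :: "(nat \<Rightarrow> ('a::euclidean_space,'l) dpclass) \<Rightarrow> ('a,'l) ptiling \<Rightarrow> bool" where
  "is_limit u \<omega> \<longleftrightarrow> is_ptiling \<omega> \<and> (\<forall>n. occurs_at (u n) \<omega>)"

definition approximating :: "('a::euclidean_space,'l) tile set \<Rightarrow> ('a,'l) dpclass set \<Rightarrow> bool" where
  "approximating T N \<longleftrightarrow> (\<forall>\<omega>\<in>OmegaN T N. \<exists>u. approx_seq T u \<and> (\<forall>n. u n \<in> N) \<and> is_limit u \<omega>)"

end

theory Submission
  imports Defs
begin


lemma tile_tr_add: "tile_tr v (tile_tr w t) = tile_tr (v + w) t"
  by (auto simp: tile_tr_def image_image add.assoc)

lemma tile_tr_0: "tile_tr 0 t = t"
  by (simp add: tile_tr_def)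

lemma tile_tr_inj: "tile_tr v s = tile_tr v t \<Longrightarrow> s = t"
  by (metis add.left_inverse tile_tr_0 tile_tr_add)

lemma inj_tile_tr: "inj (tile_tr v)"
  by (meson injI tile_tr_inj)

lemma dpp_tr_simp: "dpp_tr v (M,x,y) = (tile_tr v ` M, tile_tr v x, tile_tr v y)"
  by (simp add: dpp_tr_def)

lemma dpcls_mem: "(M',x',y') \<in> dpcls (M,x,y) \<longleftrightarrow>
   (\<exists>v. M' = tile_tr v ` M \<and> x' = tile_tr v x \<and> y' = tile_tr v y)"
  by (auto simp: dpcls_def dpp_tr_simp)

lemma dpp_tr_add: "dpp_tr v (dpp_tr w p) = dpp_tr (v + w) p"
  by (cases p) (auto simp: dpp_tr_simp image_image tile_tr_add)

lemma dpcls_eq: assumes "q \<in> dpcls p" shows "dpcls q = dpcls p"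
proof -
  obtain w where q: "q = dpp_tr w p" using assms by (auto simp: dpcls_def)
  have "dpp_tr v q \<in> dpcls p" for v by (simp add: q dpp_tr_add dpcls_def)
  moreover have "dpp_tr v p \<in> dpcls q" for v
  proof -
    have "dpp_tr v p = dpp_tr (v-w) q" using dpp_tr_add[of "v-w" w p] by (simp add: q)
    thus ?thesis by (simp add: dpcls_def)
  qed
  ultimately show ?thesis by (auto simp: dpcls_def)
qed

lemma unit_form:
  assumes "dp_unit T u"
  shows "\<exists>M x. finite M \<and> M \<subseteq> T \<and> x \<in> M \<and> u = dpcls (M,x,x)"
proof -
  obtain M x y where u: "u = dpcls (M,x,y)" "finite M" "M \<subseteq> T" "x \<in> M" "y \<in> M"
    using assms by (auto simp: dp_unit_def MII_def)
  obtain M' x' y' where "(M',x',y') \<in> u" "x' = y'" using assms by (auto simp: dp_unit_def)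
  then have "x = y" using u(1) by (auto simp: dpcls_mem dest: tile_tr_inj)
  then show ?thesis using u by blast
qed

lemma unit_members:
  assumes "u = dpcls (M,x,x)" "(M',x',y') \<in> u" shows "x' = y'"
proof -
  from assms have "(M',x',y') \<in> dpcls (M,x,x)" by simp
  then obtain v where "x' = tile_tr v x" "y' = tile_tr v x"
    unfolding dpcls_mem by blast
  thus ?thesis by simp
qed

lemma MII_form: "e \<in> MII T \<Longrightarrow> \<exists>P a b. finite P \<and> P \<subseteq> T \<and> a \<in> P \<and> b \<in> P \<and> e = dpcls (P,a,b)"
  unfolding MII_def by blast

lemma card_mem: assumes "(M,x,y) \<in> dpcls (P,a,b)" "finite P"
  shows "finite M \<and> card M = card P"
proof -
  obtain v where "M = tile_tr v ` P" using assms(1) unfolding dpcls_mem by blast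
  thus ?thesis using assms(2) by (simp add: card_image inj_on_def inj_tile_tr[THEN inj_eq])
qed

lemma dp_le_antisym:
  assumes "e \<in> MII T" "u \<in> MII T" "dp_le e u" "dp_le u e" shows "e = u"
proof -
  obtain P a b where e: "finite P" "e = dpcls (P,a,b)" using MII_form[OF assms(1)] by blast
  obtain Q c d where u: "finite Q" "u = dpcls (Q,c,d)" using MII_form[OF assms(2)] by blast
  obtain M x1 x2 N where 1: "(M,x1,x2) \<in> e" "(N,x1,x2) \<in> u" "M \<subseteq> N"
    using assms(3) by (auto simp: dp_le_def)
  obtain M' y1 y2 N' where 2: "(M',y1,y2) \<in> e" "(N',y1,y2) \<in> u" "N' \<subseteq> M'"
    using assms(4) by (auto simp: dp_le_def)
  have cM: "finite M" "card M = card P" using card_mem 1(1) e by blast+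
  have cN: "finite N" "card N = card Q" using card_mem 1(2) u by blast+
  have cM': "finite M'" "card M' = card P" using card_mem 2(1) e by blast+
  have cN': "card N' = card Q" using card_mem 2(2) u by blast
  have "card Q \<le> card P" using card_mono[OF cM'(1) 2(3)] cN' cM' by simp
  then have "M = N" using card_subset_eq[OF cN(1) 1(3)] cM cN
    by (metis card_mono 1(3) le_antisym)
  then show ?thesis using 1 dpcls_eq e u by metis
qed

lemma unit_prod:
  assumes "dp_unit T u" shows "is_prod T u u u"
proof -
  obtain M x where Mx: "finite M" "M \<subseteq> T" "x \<in> M" "u = dpcls (M,x,x)"
    using unit_form[OF assms] by blast
  have uM: "u \<in> MII T" using assms by (simp add: dp_unit_def)
  have mem: "(M,x,x) \<in> u" unfolding Mx(4) dpcls_mem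
    by (rule exI[of _ 0]) (simp add: tile_tr_0)
  have refl: "dp_le u u" unfolding dp_le_def
    by (rule bexI[OF _ mem], simp, rule bexI[OF _ mem], simp)
  have "u \<in> prod_cands T u u"
    unfolding prod_cands_def using uM mem Mx refl by blast
  moreover have "dp_le u e'" if e'c: "e' \<in> prod_cands T u u" for e'
  proof -
    obtain L z1 z2 z where L: "e' \<in> MII T" "(L,z1,z2) \<in> e'" "z \<in> L"
      "dp_le u (dpcls (L,z1,z))" "dp_le u (dpcls (L,z,z2))"
      using e'c unfolding prod_cands_def by blast
    obtain M1 a b N1 where A: "(M1,a,b) \<in> u" "(N1,a,b) \<in> dpcls (L,z1,z)" "M1 \<subseteq> N1"
      using L(4) by (auto simp: dp_le_def)
    have "a = b" using unit_members[OF Mx(4) A(1)] .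
    moreover obtain v where "a = tile_tr v z1" "b = tile_tr v z" using A(2) unfolding dpcls_mem by blast
    ultimately have "z1 = z" using tile_tr_inj by metis
    obtain M2 a2 b2 N2 where B: "(M2,a2,b2) \<in> u" "(N2,a2,b2) \<in> dpcls (L,z,z2)"
      using L(5) by (auto simp: dp_le_def)
    have "a2 = b2" using unit_members[OF Mx(4) B(1)] .
    moreover obtain v where "a2 = tile_tr v z" "b2 = tile_tr v z2" using B(2) unfolding dpcls_mem by blast
    ultimately have "z = z2" using tile_tr_inj by metis
    obtain P a b where e': "e' = dpcls (P,a,b)" using MII_form[OF L(1)] by blast
    have "dpcls (L,z1,z) = e'" using dpcls_eq[of "(L,z1,z2)" "(P,a,b)"] L(2) \<open>z1 = z\<close> \<open>z = z2\<close> e'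
      by simp
    then show ?thesis using A unfolding dp_le_def by blast
  qed
  ultimately show ?thesis by (simp add: is_prod_def)
qed

lemma unit_Rc: assumes "dp_unit T u" shows "Rc T u = u"
proof -
  obtain M x where Mx: "u = dpcls (M,x,x)" using unit_form[OF assms] by blast
  have "dpinv u = u"
  proof -
    have "dpinv u = (\<lambda>p. p) ` u" unfolding dpinv_def
    proof (rule image_cong)
      fix p assume "p \<in> u"
      then obtain A b c where "p = (A,b,c)" "(A,b,c) \<in> u" by (cases p) auto
      then show "(case p of (M, x, y) \<Rightarrow> (M, y, x)) = p" using unit_members[OF Mx, of A b c] by simp
    qed simp
    thus ?thesis by simp
  qed
  moreover have "dprod T u u = u"
  proof -
    have up: "is_prod T u u u" by (rule unit_prod[OF assms])
    have "e = u" if ep: "is_prod T u u e" for e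
    proof -
      have ec: "e \<in> prod_cands T u u" and "\<forall>e'\<in>prod_cands T u u. dp_le e e'"
        using ep unfolding is_prod_def by blast+
      moreover have uc: "u \<in> prod_cands T u u" and "\<forall>e'\<in>prod_cands T u u. dp_le u e'"
        using up unfolding is_prod_def by blast+
      ultimately have "dp_le e u" "dp_le u e" by blast+
      moreover have "e \<in> MII T" using ec unfolding prod_cands_def by blast
      moreover have "u \<in> MII T" using assms unfolding dp_unit_def by blast
      ultimately show ?thesis using dp_le_antisym by blast
    qed
    then show ?thesis unfolding dprod_def using up by (rule the_equality[rotated])
  qed
  ultimately show ?thesis by (simp add: Rc_def)
qed



lemma agree_mono:
  assumes "agree \<omega> \<omega>' r'" "r \<le> r'" shows "agree \<omega> \<omega>' r"
proof -
  obtain v where v: "tile_tr v ` patch \<omega> r' = patch \<omega>' r'" "tile_tr v (snd \<omega>) = snd \<omega>'"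
    using assms(1) unfolding agree_def by blast
  have fsv: "fst (tile_tr v t) = (\<lambda>p. v + p) ` fst t" for t by (simp add: tile_tr_def)
  have "tile_tr v ` patch \<omega> r = patch \<omega>' r"
  proof
    show "tile_tr v ` patch \<omega> r \<subseteq> patch \<omega>' r"
    proof
      fix s' assume "s' \<in> tile_tr v ` patch \<omega> r"
      then obtain s where s: "s' = tile_tr v s" "s \<in> patch \<omega> r" by blast
      then obtain p q where pq: "p \<in> fst (snd \<omega>)" "q \<in> fst s" "dist p q \<le> r" "s \<in> fst \<omega>"
        unfolding patch_def by blast
      have "s \<in> patch \<omega> r'" using pq assms(2) unfolding patch_def by force
      then have "s' \<in> fst \<omega>'" using v(1) s(1) unfolding patch_def by blast
      moreover have "v + p \<in> fst (snd \<omega>')" using pq(1) v(2) fsv by (metis imageI)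
      moreover have "v + q \<in> fst s'" using pq(2) s(1) fsv by (metis imageI)
      moreover have "dist (v+p) (v+q) \<le> r" using pq(3) by (simp add: dist_norm)
      ultimately show "s' \<in> patch \<omega>' r" unfolding patch_def by blast
    qed
  next
    show "patch \<omega>' r \<subseteq> tile_tr v ` patch \<omega> r"
    proof
      fix s' assume s': "s' \<in> patch \<omega>' r"
      then obtain p' q' where pq: "p' \<in> fst (snd \<omega>')" "q' \<in> fst s'" "dist p' q' \<le> r" "s' \<in> fst \<omega>'"
        unfolding patch_def by blast
      have "s' \<in> patch \<omega>' r'" using pq assms(2) unfolding patch_def by force
      then obtain s where s: "s' = tile_tr v s" "s \<in> patch \<omega> r'" using v(1) by blast
      obtain p where p: "p \<in> fst (snd \<omega>)" "p' = v + p" using pq(1) v(2) fsv by (metis imageE)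
      obtain q where q: "q \<in> fst s" "q' = v + q" using pq(2) s(1) fsv by (metis imageE)
      have "dist p q \<le> r" using pq(3) p q by (simp add: dist_norm)
      then have "s \<in> patch \<omega> r" using s(2) p q unfolding patch_def by blast
      then show "s' \<in> tile_tr v ` patch \<omega> r" using s(1) by blast
    qed
  qed
  then show ?thesis using v(2) unfolding agree_def by blast
qed

lemma hdist_agree:
  assumes "hdist \<omega> \<omega>' < exp (- r)" "r \<ge> 0" shows "agree \<omega> \<omega>' r"
proof (cases "\<forall>r\<ge>0. agree \<omega> \<omega>' r")
  case True then show ?thesis using assms by blast
next
  case False
  then obtain r0 where r0: "r0 \<ge> 0" "\<not> agree \<omega> \<omega>' r0" by blast
  define X where "X = insert 0 {r. r \<ge> 0 \<and> agree \<omega> \<omega>' r}"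
  have "x \<le> r0" if "x \<in> X" for x
  proof (rule ccontr)
    assume "\<not> x \<le> r0"
    then have "x \<noteq> 0" using r0 by auto
    then have "agree \<omega> \<omega>' x" using that unfolding X_def by blast
    then show False using agree_mono[of \<omega> \<omega>' x r0] r0 \<open>\<not> x \<le> r0\<close> by simp
  qed
  then have bdd: "bdd_above X" unfolding bdd_above_def by blast
  have "exp (- Sup X) < exp (- r)" using assms False unfolding hdist_def X_def by simp
  then have "r < Sup X" by simp
  then obtain x where "x \<in> X" "r < x" using less_cSup_iff[of X r] bdd unfolding X_def by blast
  then have "agree \<omega> \<omega>' x" using assms(2) unfolding X_def by auto
  then show ?thesis using agree_mono \<open>r < x\<close> by (metis less_imp_le)
qed

lemma agree_hdist:
  assumes "agree \<omega> \<omega>' r" "r \<ge> 0" shows "hdist \<omega> \<omega>' \<le> exp (- r)"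
proof (cases "\<forall>r\<ge>0. agree \<omega> \<omega>' r")
  case True then show ?thesis unfolding hdist_def by simp
next
  case False
  then obtain r0 where r0: "r0 \<ge> 0" "\<not> agree \<omega> \<omega>' r0" by blast
  define X where "X = insert 0 {r. r \<ge> 0 \<and> agree \<omega> \<omega>' r}"
  have "x \<le> r0" if "x \<in> X" for x
  proof (rule ccontr)
    assume "\<not> x \<le> r0"
    then have "x \<noteq> 0" using r0 by auto
    then have "agree \<omega> \<omega>' x" using that unfolding X_def by blast
    then show False using agree_mono[of \<omega> \<omega>' x r0] r0 \<open>\<not> x \<le> r0\<close> by simp
  qed
  then have bdd: "bdd_above X" unfolding bdd_above_def by blast
  have "r \<in> X" using assms unfolding X_def by blast
  then have "r \<le> Sup X" using bdd by (simp add: cSup_upper)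
  then show ?thesis using False unfolding hdist_def X_def by simp
qed

lemma istop_hull: "istopology (\<lambda>S. S \<subseteq> Hull T \<and>
      (\<forall>\<omega>\<in>S. \<exists>e>0. \<forall>\<omega>'\<in>Hull T. hdist \<omega> \<omega>' < e \<longrightarrow> \<omega>' \<in> S))"
  unfolding istopology_def
proof (rule conjI; intro allI impI)
  fix S S' :: "('a,'b) ptiling set"
  assume A: "S \<subseteq> Hull T \<and> (\<forall>\<omega>\<in>S. \<exists>e>0. \<forall>\<omega>'\<in>Hull T. hdist \<omega> \<omega>' < e \<longrightarrow> \<omega>' \<in> S)"
    and B: "S' \<subseteq> Hull T \<and> (\<forall>\<omega>\<in>S'. \<exists>e>0. \<forall>\<omega>'\<in>Hull T. hdist \<omega> \<omega>' < e \<longrightarrow> \<omega>' \<in> S')"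
  show "S \<inter> S' \<subseteq> Hull T \<and> (\<forall>\<omega>\<in>S \<inter> S'. \<exists>e>0. \<forall>\<omega>'\<in>Hull T. hdist \<omega> \<omega>' < e \<longrightarrow> \<omega>' \<in> S \<inter> S')"
  proof (intro conjI ballI)
    show "S \<inter> S' \<subseteq> Hull T" using A by blast
    fix \<omega> assume "\<omega> \<in> S \<inter> S'"
    then obtain e e' where "e > 0" "e' > 0" "\<forall>\<omega>'\<in>Hull T. hdist \<omega> \<omega>' < e \<longrightarrow> \<omega>' \<in> S"
      "\<forall>\<omega>'\<in>Hull T. hdist \<omega> \<omega>' < e' \<longrightarrow> \<omega>' \<in> S'" using A B by blast
    then show "\<exists>e>0. \<forall>\<omega>'\<in>Hull T. hdist \<omega> \<omega>' < e \<longrightarrow> \<omega>' \<in> S \<inter> S'"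
    proof (intro exI[of _ "min e e'"] conjI ballI impI)
      show "min e e' > 0" using \<open>e > 0\<close> \<open>e' > 0\<close> by simp
      fix \<omega>' assume "\<omega>' \<in> Hull T" "hdist \<omega> \<omega>' < min e e'"
      then show "\<omega>' \<in> S \<inter> S'" using \<open>\<forall>\<omega>'\<in>Hull T. hdist \<omega> \<omega>' < e \<longrightarrow> \<omega>' \<in> S\<close>
        \<open>\<forall>\<omega>'\<in>Hull T. hdist \<omega> \<omega>' < e' \<longrightarrow> \<omega>' \<in> S'\<close> by simp
    qed
  qed
next
  fix K :: "('a,'b) ptiling set set"
  assume "\<forall>S\<in>K. S \<subseteq> Hull T \<and> (\<forall>\<omega>\<in>S. \<exists>e>0. \<forall>\<omega>'\<in>Hull T. hdist \<omega> \<omega>' < e \<longrightarrow> \<omega>' \<in> S)"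
  then show "\<Union>K \<subseteq> Hull T \<and> (\<forall>\<omega>\<in>\<Union>K. \<exists>e>0. \<forall>\<omega>'\<in>Hull T. hdist \<omega> \<omega>' < e \<longrightarrow> \<omega>' \<in> \<Union>K)"
  proof (intro conjI ballI)
    show "\<Union>K \<subseteq> Hull T" using \<open>\<forall>S\<in>K. _\<close> by blast
  next
    fix \<omega> assume "\<omega> \<in> \<Union>K"
    then obtain S where S: "S \<in> K" "\<omega> \<in> S" by blast
    then obtain e where "e > 0" "\<forall>\<omega>'\<in>Hull T. hdist \<omega> \<omega>' < e \<longrightarrow> \<omega>' \<in> S"
      using \<open>\<forall>S\<in>K. _\<close> by blast
    then show "\<exists>e>0. \<forall>\<omega>'\<in>Hull T. hdist \<omega> \<omega>' < e \<longrightarrow> \<omega>' \<in> \<Union>K" using S by blast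
  qed
qed

lemma openin_hull: "openin (hull_top T) S \<longleftrightarrow> S \<subseteq> Hull T \<and>
      (\<forall>\<omega>\<in>S. \<exists>e>0. \<forall>\<omega>'\<in>Hull T. hdist \<omega> \<omega>' < e \<longrightarrow> \<omega>' \<in> S)"
  unfolding hull_top_def topology_inverse'[OF istop_hull] ..



lemma tiling_props:
  assumes "is_ptiling \<omega>" "t \<in> fst \<omega>"
  shows "fst t \<noteq> {}" "closed (fst t)" "closure (interior (fst t)) = fst t"
proof -
  have "is_tiling (fst \<omega>)" using assms(1) unfolding is_ptiling_def by simp
  note A = is_tiling_def[THEN iffD1, OF this, THEN conjunct2, THEN conjunct1, rule_format, OF assms(2)]
  show "fst t \<noteq> {}" "closed (fst t)" "closure (interior (fst t)) = fst t" using A by simp_all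
qed

lemma tiling_disj:
  assumes "is_ptiling \<omega>" "t \<in> fst \<omega>" "t' \<in> fst \<omega>" "interior (fst t) \<inter> interior (fst t') \<noteq> {}"
  shows "t = t'"
proof -
  have "is_tiling (fst \<omega>)" using assms(1) unfolding is_ptiling_def by simp
  note A = is_tiling_def[THEN iffD1, OF this, THEN conjunct2, THEN conjunct2, THEN conjunct2, THEN conjunct2, rule_format, OF assms(2,3)]
  show ?thesis using A assms(4) by blast
qed

lemma fst_tile_tr: "fst (tile_tr v t) = (\<lambda>p. v + p) ` fst t"
  by (simp add: tile_tr_def)

lemma cov_tr:
  assumes "\<forall>p\<in>fst x. cball p r \<subseteq> \<Union>(fst ` M)"
  shows "\<forall>p\<in>fst (tile_tr v x). cball p r \<subseteq> \<Union>(fst ` (tile_tr v ` M))"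
proof
  fix p' assume "p' \<in> fst (tile_tr v x)"
  then obtain p where p: "p \<in> fst x" "p' = v + p" unfolding fst_tile_tr by blast
  have "cball p' r = (\<lambda>q. v + q) ` cball p r" using p(2) cball_translation by blast
  also have "\<dots> \<subseteq> (\<lambda>q. v + q) ` \<Union>(fst ` M)" using assms p(1) by blast
  also have "\<dots> = \<Union>(fst ` (tile_tr v ` M))" unfolding image_Union image_image fst_tile_tr ..
  finally show "cball p' r \<subseteq> \<Union>(fst ` (tile_tr v ` M))" .
qed

lemma same_class:
  assumes "(A,a1,a2) \<in> dpcls p" "(B,b1,b2) \<in> dpcls p"
  shows "\<exists>v. B = tile_tr v ` A \<and> b1 = tile_tr v a1 \<and> b2 = tile_tr v a2"
proof -
  have "dpcls (A,a1,a2) = dpcls p" by (rule dpcls_eq[OF assms(1)])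
  then have "(B,b1,b2) \<in> dpcls (A,a1,a2)" using assms(2) by simp
  then show ?thesis unfolding dpcls_mem .
qed

lemma class_tr:
  assumes "q \<in> dpcls p" shows "dpp_tr v q \<in> dpcls p"
proof -
  have "dpcls q = dpcls p" by (rule dpcls_eq[OF assms])
  moreover have "dpp_tr v q \<in> dpcls q" unfolding dpcls_def by blast
  ultimately show ?thesis by simp
qed

lemma fin_baire:
  "finite F \<Longrightarrow> \<forall>C\<in>F. closed C \<Longrightarrow> open Op \<Longrightarrow> Op \<noteq> {} \<Longrightarrow> Op \<subseteq> \<Union>F
   \<Longrightarrow> \<exists>C\<in>F. interior C \<inter> Op \<noteq> {}"
proof (induction F arbitrary: Op rule: finite_induct)
  case empty then show ?case by simp
next
  case (insert C F)
  show ?case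
  proof (cases "Op \<subseteq> C")
    case True
    then have "Op \<subseteq> interior C" using insert.prems(2) by (simp add: interior_maximal)
    then show ?thesis using insert.prems(3) by blast
  next
    case False
    have "open (Op - C)" using insert.prems(1,2) by (simp add: open_Diff)
    moreover have "Op - C \<noteq> {}" using False by blast
    moreover have "Op - C \<subseteq> \<Union>F" using insert.prems(4) by blast
    ultimately obtain C' where "C' \<in> F" "interior C' \<inter> (Op - C) \<noteq> {}"
      using insert.IH insert.prems(1) by blast
    then show ?thesis by blast
  qed
qed

lemma patch_det:
  assumes pt: "is_ptiling \<omega>" and M: "M \<subseteq> fst \<omega>" "finite M"
    and cov: "\<forall>p\<in>fst (snd \<omega>). cball p r \<subseteq> \<Union>(fst ` M)" and rr: "r' < r"
  shows "patch \<omega> r' = {s\<in>M. \<exists>p\<in>fst (snd \<omega>). \<exists>q\<in>fst s. dist p q \<le> r'}"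
proof
  show "{s\<in>M. \<exists>p\<in>fst (snd \<omega>). \<exists>q\<in>fst s. dist p q \<le> r'} \<subseteq> patch \<omega> r'"
    using M(1) unfolding patch_def by blast
next
  show "patch \<omega> r' \<subseteq> {s\<in>M. \<exists>p\<in>fst (snd \<omega>). \<exists>q\<in>fst s. dist p q \<le> r'}"
  proof
    fix s assume "s \<in> patch \<omega> r'"
    then obtain p q where pq: "s \<in> fst \<omega>" "p \<in> fst (snd \<omega>)" "q \<in> fst s" "dist p q \<le> r'"
      unfolding patch_def by blast
    have qb: "q \<in> ball p r" using pq(4) rr by simp
    have "q \<in> closure (interior (fst s))" using tiling_props(3)[OF pt pq(1)] pq(3) by simp
    then have ne: "ball p r \<inter> interior (fst s) \<noteq> {}"
      using open_Int_closure_eq_empty[of "ball p r" "interior (fst s)"] qb by blast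
    define Op where "Op = ball p r \<inter> interior (fst s)"
    have "open Op" unfolding Op_def by auto
    moreover have "Op \<noteq> {}" using ne Op_def by simp
    moreover have "Op \<subseteq> \<Union>(fst ` M)"
    proof -
      have "cball p r \<subseteq> \<Union>(fst ` M)" using cov pq(2) by blast
      then show ?thesis unfolding Op_def using ball_subset_cball by blast
    qed
    moreover have "\<forall>C\<in>fst ` M. closed C"
    proof
      fix C assume "C \<in> fst ` M"
      then obtain m where "m \<in> M" "C = fst m" by blast
      then show "closed C" using tiling_props(2)[OF pt] M(1) by blast
    qed
    moreover have "finite (fst ` M)" using M(2) by simp
    ultimately obtain C where "C \<in> fst ` M" "interior C \<inter> Op \<noteq> {}"
      using fin_baire[of "fst ` M" Op] by blast
    then obtain m where m: "m \<in> M" "interior (fst m) \<inter> interior (fst s) \<noteq> {}"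
      unfolding Op_def by blast
    have "m = s" using tiling_disj[OF pt _ pq(1) m(2)] m(1) M(1) by blast
    then show "s \<in> {s\<in>M. \<exists>p\<in>fst (snd \<omega>). \<exists>q\<in>fst s. dist p q \<le> r'}" using m(1) pq by blast
  qed
qed

lemma near_tr: "(\<exists>p\<in>fst (tile_tr v x). \<exists>q\<in>fst (tile_tr v s). dist p q \<le> r) \<longleftrightarrow>
    (\<exists>p\<in>fst x. \<exists>q\<in>fst s. dist p q \<le> r)"
  unfolding fst_tile_tr by (simp add: dist_norm)

lemma occ_agree:
  assumes pt: "is_ptiling \<omega>" "is_ptiling \<omega>'"
    and M1: "M1 \<subseteq> fst \<omega>" "finite M1"
    and cov: "\<forall>p\<in>fst (snd \<omega>). cball p r \<subseteq> \<Union>(fst ` M1)"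
    and M2: "tile_tr v ` M1 \<subseteq> fst \<omega>'" "snd \<omega>' = tile_tr v (snd \<omega>)"
    and rr: "r' < r"
  shows "agree \<omega> \<omega>' r'"
proof -
  have cov2: "\<forall>p\<in>fst (snd \<omega>'). cball p r \<subseteq> \<Union>(fst ` (tile_tr v ` M1))"
    unfolding M2(2) by (rule cov_tr[OF cov])
  have P1: "patch \<omega> r' = {s\<in>M1. \<exists>p\<in>fst (snd \<omega>). \<exists>q\<in>fst s. dist p q \<le> r'}"
    by (rule patch_det[OF pt(1) M1 cov rr])
  have P2: "patch \<omega>' r' = {s\<in>tile_tr v ` M1. \<exists>p\<in>fst (snd \<omega>'). \<exists>q\<in>fst s. dist p q \<le> r'}"
    using M1(2) by (intro patch_det[OF pt(2) M2(1) _ cov2 rr]) simp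
  have "tile_tr v ` patch \<omega> r' = patch \<omega>' r'"
  proof
    show "tile_tr v ` patch \<omega> r' \<subseteq> patch \<omega>' r'"
    proof
      fix s' assume "s' \<in> tile_tr v ` patch \<omega> r'"
      then obtain s where s: "s' = tile_tr v s" "s \<in> M1" "\<exists>p\<in>fst (snd \<omega>). \<exists>q\<in>fst s. dist p q \<le> r'"
        unfolding P1 by blast
      have "\<exists>p\<in>fst (tile_tr v (snd \<omega>)). \<exists>q\<in>fst (tile_tr v s). dist p q \<le> r'"
        by (rule near_tr[THEN iffD2, OF s(3)])
      then show "s' \<in> patch \<omega>' r'" unfolding P2 M2(2) using s(1,2) by blast
    qed
    show "patch \<omega>' r' \<subseteq> tile_tr v ` patch \<omega> r'"
    proof
      fix s' assume "s' \<in> patch \<omega>' r'"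
      then obtain s where s2: "s \<in> M1" "s' = tile_tr v s"
        "\<exists>p\<in>fst (tile_tr v (snd \<omega>)). \<exists>q\<in>fst (tile_tr v s). dist p q \<le> r'"
        unfolding P2 M2(2) by blast
      have "\<exists>p\<in>fst (snd \<omega>). \<exists>q\<in>fst s. dist p q \<le> r'" by (rule near_tr[THEN iffD1, OF s2(3)])
      then show "s' \<in> tile_tr v ` patch \<omega> r'" unfolding P1 using s2(1,2) by blast
    qed
  qed
  then show ?thesis unfolding agree_def
    by (intro exI[of _ v] conjI) (simp_all add: M2(2))
qed



lemma fin_in_patch:
  assumes pt: "is_ptiling \<omega>" and M: "finite M" "M \<subseteq> fst \<omega>"
  shows "\<exists>r\<ge>0. M \<subseteq> patch \<omega> r"
proof -
  have "snd \<omega> \<in> fst \<omega>" using pt unfolding is_ptiling_def by simp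
  then obtain p0 where p0: "p0 \<in> fst (snd \<omega>)" using tiling_props(1)[OF pt] by blast
  define q where "q m = (SOME q. q \<in> fst m)" for m :: "('a,'b) tile"
  have qm: "q m \<in> fst m" if "m \<in> M" for m
  proof -
    have "fst m \<noteq> {}" using tiling_props(1)[OF pt] that M(2) by blast
    then show ?thesis unfolding q_def by (simp add: some_in_eq)
  qed
  define r where "r = (\<Sum>m\<in>M. dist p0 (q m))"
  have "r \<ge> 0" unfolding r_def by (simp add: sum_nonneg)
  moreover have "M \<subseteq> patch \<omega> r"
  proof
    fix m assume m: "m \<in> M"
    have "dist p0 (q m) \<le> r" unfolding r_def
      by (rule member_le_sum[OF m _ M(1)]) simp
    then show "m \<in> patch \<omega> r" unfolding patch_def using m M(2) p0 qm[OF m] by blast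
  qed
  ultimately show ?thesis by blast
qed

lemma Uset_open:
  assumes u: "dp_unit T u" shows "openin (hull_top T) (Uset T u)"
  unfolding openin_hull
proof (intro conjI ballI)
  show "Uset T u \<subseteq> Hull T" unfolding Uset_def by blast
next
  fix \<omega> assume w: "\<omega> \<in> Uset T u"
  obtain M0 x0 where u0: "finite M0" "u = dpcls (M0,x0,x0)" using unit_form[OF u] by blast
  have H: "\<omega> \<in> Hull T" and occ: "occurs_at u \<omega>" using w unfolding Uset_def by blast+
  have pt: "is_ptiling \<omega>" using H unfolding Hull_def by blast
  obtain M1 where M1: "(M1, snd \<omega>, snd \<omega>) \<in> u" "M1 \<subseteq> fst \<omega>"
    using occ unfolding occurs_at_def by blast
  have fM1: "finite M1" using card_mem[of M1 "snd \<omega>" "snd \<omega>" M0 x0 x0] M1(1) u0 by simp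
  obtain r where r: "r \<ge> 0" "M1 \<subseteq> patch \<omega> r" using fin_in_patch[OF pt fM1 M1(2)] by blast
  show "\<exists>e>0. \<forall>\<omega>'\<in>Hull T. hdist \<omega> \<omega>' < e \<longrightarrow> \<omega>' \<in> Uset T u"
  proof (intro exI[of _ "exp (- r)"] conjI ballI impI)
    show "exp (- r) > 0" by simp
    fix \<omega>' assume H': "\<omega>' \<in> Hull T" and d: "hdist \<omega> \<omega>' < exp (- r)"
    have "agree \<omega> \<omega>' r" by (rule hdist_agree[OF d r(1)])
    then obtain v where v: "tile_tr v ` patch \<omega> r = patch \<omega>' r" "tile_tr v (snd \<omega>) = snd \<omega>'"
      unfolding agree_def by blast
    have "dpp_tr v (M1, snd \<omega>, snd \<omega>) \<in> u" using class_tr M1(1) u0(2) by metis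
    then have mem: "(tile_tr v ` M1, snd \<omega>', snd \<omega>') \<in> u" by (simp add: dpp_tr_simp v(2))
    have "tile_tr v ` M1 \<subseteq> patch \<omega>' r" using r(2) v(1) by blast
    then have "tile_tr v ` M1 \<subseteq> fst \<omega>'" unfolding patch_def by blast
    then have "occurs_at u \<omega>'" unfolding occurs_at_def using mem by blast
    then show "\<omega>' \<in> Uset T u" unfolding Uset_def using H' by blast
  qed
qed

lemma OmegaN_Hull: "OmegaN T N \<subseteq> Hull T"
  unfolding OmegaN_def Uset_def by blast

lemma Uset_OmegaN: assumes "dp_unit T u" "u \<in> N" shows "Uset T u \<subseteq> OmegaN T N"
proof -
  have "Uset T (Rc T u) = Uset T u" using unit_Rc[OF assms(1)] by simp
  then show ?thesis unfolding OmegaN_def using assms(2) by blast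
qed

lemma rad_witness:
  assumes u: "dp_unit T u" and R: "rad u > R"
  shows "\<exists>r>R. \<exists>(M,x,y)\<in>u. \<forall>p\<in>fst x. cball p r \<subseteq> \<Union>(fst ` M)"
proof -
  define X where "X = {r. \<exists>(M,x,y)\<in>u. \<forall>p\<in>fst x. cball p r \<subseteq> \<Union>(fst ` M)}"
  obtain M0 x0 where u0: "u = dpcls (M0,x0,x0)" using unit_form[OF u] by blast
  have mem: "(M0,x0,x0) \<in> u" unfolding u0 dpcls_mem
    by (rule exI[of _ 0]) (simp add: tile_tr_0)
  have "\<forall>p\<in>fst x0. cball p (-1) \<subseteq> \<Union>(fst ` M0)" by simp
  then have "-1 \<in> X" unfolding X_def using mem by blast
  then have ne: "X \<noteq> {}" by blast
  have "\<exists>r\<in>X. R < r"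
  proof (cases "bdd_above X")
    case True
    have "R < Sup X" using R unfolding rad_def X_def by simp
    then show ?thesis using less_cSup_iff[OF ne True] by blast
  next
    case False
    then show ?thesis unfolding bdd_above_def by (meson not_le)
  qed
  then show ?thesis unfolding X_def by blast
qed

lemma approx_nbhd:
  assumes ap: "approximating T N" and w: "\<omega> \<in> OmegaN T N" and e: "e > 0"
  shows "\<exists>u. u \<in> N \<and> dp_unit T u \<and> \<omega> \<in> Uset T u \<and> (\<forall>\<omega>'\<in>Uset T u. hdist \<omega> \<omega>' < e)"
proof -
  obtain u where u: "approx_seq T u" "\<forall>n. u n \<in> N" "is_limit u \<omega>"
    using approximating_def[THEN iffD1, OF ap, rule_format, OF w] by blast
  define R where "R = max 0 (- ln e) + 1"
  note AS = approx_seq_def[THEN iffD1, OF u(1)]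
  have "filterlim (\<lambda>n. rad (u n)) at_top sequentially" using AS by (elim conjE)
  then have "eventually (\<lambda>n. R < rad (u n)) sequentially" by (simp add: filterlim_at_top_dense)
  then obtain n where n: "R < rad (u n)" by (metis eventually_sequentially order.refl)
  have un: "dp_unit T (u n)" using AS by (elim conjE) (rule spec)
  obtain M0 x0 where u0: "finite M0" "u n = dpcls (M0,x0,x0)" using unit_form[OF un] by blast
  obtain r M x y where rM: "r > R" "(M,x,y) \<in> u n" "\<forall>p\<in>fst x. cball p r \<subseteq> \<Union>(fst ` M)"
    using rad_witness[OF un n] by blast
  have pt: "is_ptiling \<omega>" using u(3) unfolding is_limit_def by blast
  have occ: "occurs_at (u n) \<omega>" using u(3) unfolding is_limit_def by blast
  have H: "\<omega> \<in> Hull T" using w OmegaN_Hull by blast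
  have wU: "\<omega> \<in> Uset T (u n)" unfolding Uset_def using H occ by blast
  obtain M1 where M1: "(M1, snd \<omega>, snd \<omega>) \<in> u n" "M1 \<subseteq> fst \<omega>"
    using occ unfolding occurs_at_def by blast
  have fM1: "finite M1" using card_mem[of M1 "snd \<omega>" "snd \<omega>" M0 x0 x0] M1(1) u0 by simp
  obtain a where a: "M1 = tile_tr a ` M" "snd \<omega> = tile_tr a x"
    using same_class[of M x y "(M0,x0,x0)" M1 "snd \<omega>" "snd \<omega>"] rM(2) M1(1) u0(2) by auto
  have cov: "\<forall>p\<in>fst (snd \<omega>). cball p r \<subseteq> \<Union>(fst ` M1)"
    unfolding a by (rule cov_tr[OF rM(3)])
  have R0: "R \<ge> 0" unfolding R_def by simp
  have "hdist \<omega> \<omega>' < e" if w': "\<omega>' \<in> Uset T (u n)" for \<omega>'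
  proof -
    have H': "\<omega>' \<in> Hull T" and occ': "occurs_at (u n) \<omega>'" using w' unfolding Uset_def by blast+
    have pt': "is_ptiling \<omega>'" using H' unfolding Hull_def by blast
    obtain M2 where M2: "(M2, snd \<omega>', snd \<omega>') \<in> u n" "M2 \<subseteq> fst \<omega>'"
      using occ' unfolding occurs_at_def by blast
    obtain v where v: "M2 = tile_tr v ` M1" "snd \<omega>' = tile_tr v (snd \<omega>)"
      using same_class[of M1 "snd \<omega>" "snd \<omega>" "(M0,x0,x0)" M2 "snd \<omega>'" "snd \<omega>'"] M1(1) M2(1) u0(2)
      by auto
    have "agree \<omega> \<omega>' R"
      by (rule occ_agree[OF pt pt' M1(2) fM1 cov _ v(2) rM(1)]) (use M2(2) v(1) in blast)
    then have "hdist \<omega> \<omega>' \<le> exp (- R)" using agree_hdist R0 by blast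
    also have "exp (- R) < e"
    proof -
      have "- R < ln e" unfolding R_def by linarith
      then have "exp (- R) < exp (ln e)" by simp
      then show ?thesis using e by simp
    qed
    finally show ?thesis .
  qed
  then show ?thesis using wU un u(2) by blast
qed

theorem mainTheorem11:
  fixes T :: "('a::euclidean_space, 'l) tile set"
    and N :: "('a, 'l) dpclass set"
  assumes "is_tiling T" and "flc T"
    and "sub_almost_groupoid T N" and "approximating T N"
  shows "subtopology (hull_top T) (OmegaN T N) =
         topology_generated_by {Uset T u | u. u \<in> N \<and> dp_unit T u}"
proof -
  define B where "B = {Uset T u | u. u \<in> N \<and> dp_unit T u}"
  have "openin (subtopology (hull_top T) (OmegaN T N)) S \<longleftrightarrow> generate_topology_on B S" for S
  proof
    assume "openin (subtopology (hull_top T) (OmegaN T N)) S"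
    then obtain W where W: "openin (hull_top T) W" "S = W \<inter> OmegaN T N"
      unfolding openin_subtopology by blast
    have eq: "\<Union>{U \<in> B. U \<subseteq> S} = S"
    proof
      show "\<Union>{U\<in>B. U \<subseteq> S} \<subseteq> S" by blast
      show "S \<subseteq> \<Union>{U\<in>B. U\<subseteq>S}"
      proof
        fix \<omega> assume "\<omega> \<in> S"
        then have wW: "\<omega> \<in> W" and wO: "\<omega> \<in> OmegaN T N" unfolding W(2) by blast+
        obtain e where e: "e > 0" "\<forall>\<omega>'\<in>Hull T. hdist \<omega> \<omega>' < e \<longrightarrow> \<omega>' \<in> W"
          using W(1) wW unfolding openin_hull by blast
        obtain u where u: "u \<in> N" "dp_unit T u" "\<omega> \<in> Uset T u" "\<forall>\<omega>'\<in>Uset T u. hdist \<omega> \<omega>' < e"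
          using approx_nbhd[OF assms(4) wO e(1)] by blast
        have "Uset T u \<subseteq> W"
        proof
          fix \<omega>' assume "\<omega>' \<in> Uset T u"
          moreover then have "\<omega>' \<in> Hull T" unfolding Uset_def by blast
          ultimately show "\<omega>' \<in> W" using u(4) e(2) by blast
        qed
        moreover have "Uset T u \<subseteq> OmegaN T N" using Uset_OmegaN u(1,2) by blast
        ultimately have "Uset T u \<subseteq> S" unfolding W(2) by blast
        moreover have "Uset T u \<in> B" using u(1,2) unfolding B_def by blast
        ultimately show "\<omega> \<in> \<Union>{U\<in>B. U\<subseteq>S}" using u(3) by blast
      qed
    qed
    have "generate_topology_on B (\<Union>{U\<in>B. U\<subseteq>S})"
      by (rule generate_topology_on.UN) (blast intro: generate_topology_on.Basis)
    then show "generate_topology_on B S" unfolding eq .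
  next
    assume "generate_topology_on B S"
    then show "openin (subtopology (hull_top T) (OmegaN T N)) S"
    proof induction
      case Empty
      then show ?case by simp
    next
      case (Int a b)
      then show ?case by (intro openin_Int) (simp_all only:)
    next
      case (UN K)
      then show ?case by (intro openin_Union) blast
    next
      case (Basis s)
      then obtain u where u: "s = Uset T u" "u \<in> N" "dp_unit T u" unfolding B_def by blast
      have "openin (hull_top T) s" unfolding u(1) by (rule Uset_open[OF u(3)])
      moreover have "s = s \<inter> OmegaN T N" using Uset_OmegaN[OF u(3,2)] u(1) by blast
      ultimately show ?case unfolding openin_subtopology by blast
    qed
  qed
  then show ?thesis unfolding topology_eq openin_topology_generated_by_iff B_def by blast
qed


end
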